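(* Let $\delta=\delta_1^{x_1}\cdots\delta_n^{x_n}$ with distinct primes $\delta_i$, and let $f$ be a function on $2\times2$ rational matrices. Writing elements of $\mathbb{M}_\delta$ as $A=\begin{pmatrix} n_1&l_1\\ n_2&\tfrac1\delta l_2\end{pmatrix}$, it holds, at least as a formal sum, $$\sum_{\substack{A\in\mathbb{M}_\delta,\ \det A\neq0\\ \delta_1\nmid l_2\,\wedge\dots\wedge\,\delta_n\nmid l_2}}f(A)=\sum_{l=0}^{n}(-1)^l\sum_{\delta^{(l)}\in\mathcal{C}_l(\delta)}\ \sum_{\substack{k,j,p\in\mathbb{Z}\\ k>j\ge0,\ p\neq0}}\ \sum_{P\in\Gamma_0(\delta)}f\left(\begin{pmatrix}k&j\\0&\frac{\delta^{(l)}}{\delta}p\end{pmatrix}\cdot P\right).$$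
   Context: $\mathbb{M}_\delta=\{\begin{pmatrix} n_1&l_1\\ n_2&\tfrac1\delta l_2\end{pmatrix}: n_1,n_2,l_1,l_2\in\mathbb{Z}\}$. $\Gamma_0(\delta)=\{\begin{pmatrix}a&b\\ \delta c&d\end{pmatrix}\in\mathrm{SL}(2,\mathbb{Z})\}$. $\mathcal{C}_l(\delta)$ is the set of all products of $l$ distinct prime factors of $\delta$, with $\mathcal{C}_0(\delta)=\{1\}$; the product $\cdot$ is matrix multiplication. *)

theory Defs
  imports "HOL-Analysis.Analysis"
begin

type_synonym qmat = "rat^2^2"

definition mat2 :: "rat \<Rightarrow> rat \<Rightarrow> rat \<Rightarrow> rat \<Rightarrow> qmat" where
  "mat2 a b c d = (\<chi> i j. if i = 1 then (if j = 1 then a else b) else (if j = 1 then c else d))"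

definition LHS_set :: "nat \<Rightarrow> qmat set" where
  "LHS_set \<delta> = {A. \<exists>n1 l1 n2 l2 :: int.
      A = mat2 (of_int n1) (of_int l1) (of_int n2) (of_int l2 / of_nat \<delta>)
      \<and> det A \<noteq> 0 \<and> (\<forall>q \<in> prime_factors \<delta>. \<not> int q dvd l2)}"

definition C_set :: "nat \<Rightarrow> nat \<Rightarrow> nat set" where
  "C_set l \<delta> = {\<Prod>S | S. S \<subseteq> prime_factors \<delta> \<and> card S = l}"

definition Gamma0 :: "nat \<Rightarrow> qmat set" where
  "Gamma0 \<delta> = {mat2 (of_int a) (of_int b) (of_int (int \<delta> * c)) (of_int d) | a b c d :: int.
      a * d - b * (int \<delta> * c) = 1}"

text \<open>Index tuples (k,j,p,P) of the right-hand side (for fixed delta^(l) = d)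
  whose term is f(M).\<close>
definition reps :: "nat \<Rightarrow> nat \<Rightarrow> qmat \<Rightarrow> (int \<times> int \<times> int \<times> qmat) set" where
  "reps \<delta> d M = {(k, j, p, P). k > j \<and> j \<ge> 0 \<and> p \<noteq> 0 \<and> P \<in> Gamma0 \<delta> \<and>
      mat2 (of_int k) (of_int j) 0 (of_nat d / of_nat \<delta> * of_int p) ** P = M}"

end

theory Submission
  imports Defs "HOL-Computational_Algebra.Primes"
begin


lemma int_uniq:
  fixes d p k j a b c e p' k' j' a' b' c' e' \<delta> :: int
  assumes "d > 0" "p \<noteq> 0" "k > j" "j \<ge> 0" "k' > j'" "j' \<ge> 0"
  "a * e - b * (\<delta> * c) = 1" "a' * e' - b' * (\<delta> * c') = 1"
  "k * a + j * (\<delta> * c) = k' * a' + j' * (\<delta> * c')" "k * b + j * e = k' * b' + j' * e'"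
  "d * p * c = d * p' * c'" "d * p * e = d * p' * e'"
  shows "k=k' \<and> j=j' \<and> p=p' \<and> a=a' \<and> b=b' \<and> c=c' \<and> e=e'"
proof -
  have h1: "(k * a + j * (\<delta> * c)) * (d * p * e) - (k * b+j * e) * (\<delta> * (d * p * c)) = d * p * k * (a * e - b * (\<delta> * c))"
    by (simp add: algebra_simps)
  have h2: "(k' * a' + j' * (\<delta> * c')) * (d * p' * e') - (k' * b'+j' * e') * (\<delta> * (d * p' * c')) = d * p' * k' * (a' * e' - b' * (\<delta> * c'))"
    by (simp add: algebra_simps)
  have "d * p * k = (k * a + j * (\<delta> * c)) * (d * p * e) - (k * b+j * e) * (\<delta> * (d * p * c))" using h1 assms(7) by simp
  also have "\<dots> = (k' * a' + j' * (\<delta> * c')) * (d * p' * e') - (k' * b'+j' * e') * (\<delta> * (d * p' * c'))"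
    by (simp only: assms(9-12))
  also have "\<dots> = d * p' * k'" using h2 assms(8) by simp
  finally have D: "d * p * k = d * p' * k'" .
  have t1: "d * p' = d * p * (a' * e - b' * (\<delta> * c))"
  proof -
    have "d * p' = d * p' * (a' * e' - b' * (\<delta> * c'))" using assms(8) by simp
    also have "\<dots> = a' * (d * p' * e') - b' * \<delta> * (d * p' * c')" by (simp add: algebra_simps)
    also have "\<dots> = a' * (d * p * e) - b' * \<delta> * (d * p * c)" by (simp only: assms(11,12))
    also have "\<dots> = d * p * (a' * e - b' * (\<delta> * c))" by (simp add: algebra_simps)
    finally show ?thesis .
  qed
  have t2: "d * p = d * p' * (a * e' - b * (\<delta> * c'))"
  proof -
    have "d * p = d * p * (a * e - b * (\<delta> * c))" using assms(7) by simp
    also have "\<dots> = a * (d * p * e) - b * \<delta> * (d * p * c)" by (simp add: algebra_simps)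
    also have "\<dots> = a * (d * p' * e') - b * \<delta> * (d * p' * c')" by (simp only: assms(11,12))
    also have "\<dots> = d * p' * (a * e' - b * (\<delta> * c'))" by (simp add: algebra_simps)
    finally show ?thesis .
  qed
  have dv1: "d * p dvd d * p'" using t1 by (rule dvdI)
  have dv2: "d * p' dvd d * p" using t2 by (rule dvdI)
  have ab: "\<bar>d * p\<bar> = \<bar>d * p'\<bar>" using zdvd_antisym_abs[OF dv1 dv2] .
  have dp0: "d * p \<noteq> 0" using assms(1,2) by simp
  have kpos: "k > 0" "k' > 0" using assms(3-6) by simp_all
  have ne: "d * p \<noteq> -(d * p')"
  proof
    assume "d * p = -(d * p')"
    then have "d * p * k' = - (d * p' * k')" by simp
    then have "d * p * k + d * p * k' = 0" using D by simp
    then have "d * p * (k+k') = 0" by (simp add: distrib_left)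
    moreover have "k+k' \<noteq> 0" using kpos by simp
    ultimately show False using dp0 by simp
  qed
  have dp: "d * p = d * p'" using ab ne by arith
  have pp: "p = p'" using dp assms(1) by simp
  have kk: "k = k'" using D dp dp0 by simp
  have cc: "c = c'" using assms(11) dp dp0 by simp
  have ee: "e = e'" using assms(12) dp dp0 by simp
  have q1: "k * (a-a') = (j'-j) * (\<delta> * c)" using assms(9) unfolding kk cc by (simp add: algebra_simps)
  have q2: "k * (b-b') = (j'-j) * e" using assms(10) unfolding kk ee by (simp add: algebra_simps)
  have "j'-j = (j'-j) * (a * e - b * (\<delta> * c))" using assms(7) by simp
  also have "\<dots> = a * ((j'-j) * e) - b * ((j'-j) * (\<delta> * c))" by (simp add: algebra_simps)
  also have "\<dots> = k * (a * (b-b') - b * (a-a'))" unfolding q1[symmetric] q2[symmetric] by (simp add: algebra_simps)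
  finally have kd: "k dvd (j'-j)" by (rule dvdI)
  have lt: "\<bar>j'-j\<bar> < k" using assms(3-6) kk by arith
  have jj: "j = j'"
  proof (rule ccontr)
    assume "j \<noteq> j'"
    then have "j' - j \<noteq> 0" by simp
    from dvd_imp_le_int[OF this kd] lt kpos show False by simp
  qed
  have "k * (a-a') = 0" "k * (b-b') = 0" using q1 q2 jj by simp_all
  then have "a = a'" "b = b'" using kpos by simp_all
  then show ?thesis using kk jj pp cc ee by simp
qed

lemma int_nec:
  fixes d p k j a b c e \<delta> :: int
  assumes "d > 0" "p \<noteq> 0" "k > 0" "a * e - b * (\<delta> * c) = 1"
  shows "gcd (\<delta> * (d * p * c)) (d * p * e) dvd d * p * c"
    "(k * a + j * (\<delta> * c)) * (d * p * e) - \<delta> * (k * b+j * e) * (d * p * c) \<noteq> 0"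
proof -
  let ?g = "gcd (\<delta> * (d * p * c)) (d * p * e)"
  have "?g dvd a * (d * p * e) - b * (\<delta> * (d * p * c))" by simp
  also have "a * (d * p * e) - b * (\<delta> * (d * p * c)) = d * p * (a * e - b * (\<delta> * c))" by (simp add: algebra_simps)
  finally have "?g dvd d * p" using assms by simp
  then show "?g dvd d * p * c" by simp
  have "(k * a + j * (\<delta> * c)) * (d * p * e) - \<delta> * (k * b+j * e) * (d * p * c) = d * p * k * (a * e - b * (\<delta> * c))"
    by (simp add: algebra_simps)
  then show "(k * a + j * (\<delta> * c)) * (d * p * e) - \<delta> * (k * b+j * e) * (d * p * c) \<noteq> 0" using assms by simp
qed

lemma int_ex:
  fixes d n1 l1 n2 L \<delta> :: int
  assumes "\<delta> > 0" "d > 0" "d dvd \<delta>" "d dvd L" "n1 * L - \<delta> * l1 * n2 \<noteq> 0" "gcd (\<delta> * n2) L dvd n2"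
  shows "\<exists>k j p a b c e. k>j \<and> j\<ge>0 \<and> p\<noteq>0 \<and> a * e - b * (\<delta> * c) = 1 \<and> k * a + j * (\<delta> * c) = n1 \<and>
     k * b + j * e = l1 \<and> d * p * c = n2 \<and> d * p * e = L"
proof -
  define D where "D = n1 * L - \<delta> * l1 * n2"
  define g where "g = gcd (\<delta> * n2) L"
  have nz: "\<delta> * n2 \<noteq> 0 \<or> L \<noteq> 0" using assms(5) by auto
  then have gpos: "g > 0" unfolding g_def by simp
  have "d dvd g" unfolding g_def using assms(3,4) by simp
  then obtain r where r: "g = d * r" by blast
  define sg where "sg = sgn D"
  have s2: "sg *  sg = 1" using assms(5) unfolding sg_def D_def by (simp add: sgn_if)
  define p where "p = sg * r"
  have dp: "d * p = sg * g" unfolding p_def r by simp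
  have gn2: "g dvd n2" using assms(6) g_def by simp
  have gL: "g dvd L" unfolding g_def by simp
  define c where "c = sg * (n2 div g)"
  define e where "e = sg * (L div g)"
  have "d * p * c = (sg *  sg) * (g * (n2 div g))" unfolding dp c_def by (simp add: algebra_simps)
  then have dpc: "d * p * c = n2" using gn2 s2 by simp
  have "d * p * e = (sg *  sg) * (g * (L div g))" unfolding dp e_def by (simp add: algebra_simps)
  then have dpe: "d * p * e = L" using gL s2 by simp
  have sc: "sg = 1 \<or> sg = -1" using assms(5) unfolding sg_def D_def by (simp add: sgn_if)
  have cop0: "coprime ((\<delta> * n2) div g) (L div g)" unfolding g_def by (rule div_gcd_coprime[OF nz])
  have "(\<delta> * n2) div g = \<delta> * (n2 div g)" using gn2 by (simp add: div_mult_swap)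
  then have "coprime (\<delta> * c) e" using cop0 sc unfolding c_def e_def by auto
  then have "gcd (\<delta> * c) e = 1" by simp
  then obtain u v where uv: "u * (\<delta> * c) + v * e = 1" using bezout_int[of "\<delta> * c" e] by auto
  define k where "k = n1 * e - l1 * (\<delta> * c)"
  have "d * p * k = n1 * (d * p * e) - \<delta> * l1 * (d * p * c)" unfolding k_def by (simp add: algebra_simps)
  then have dpk: "d * p * k = D" unfolding D_def using dpc dpe by simp
  have kpos: "k > 0"
  proof (cases "D > 0")
    case True
    then have "sg = 1" unfolding sg_def by simp
    then have "g * k = D" using dpk dp by simp
    then show ?thesis using True gpos zero_less_mult_pos by metis
  next
    case False
    then have "D < 0" using assms(5) D_def by simp
    then have "sg = -1" unfolding sg_def by simp
    then have "g * k = -D" using dpk dp by simp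
    then have "0 < g * k" using \<open>D<0\<close> by simp
    then show ?thesis using gpos zero_less_mult_pos by metis
  qed
  define a0 where "a0 = v"
  define b0 where "b0 = -u"
  define t where "t = (l1 * a0 - n1 * b0) div k"
  define a where "a = a0 + t * (\<delta> * c)"
  define b where "b = b0 + t * e"
  define j where "j = l1 * a - n1 * b"
  have j: "j = (l1 * a0 - n1 * b0) mod k"
  proof -
    have "j = (l1 * a0 - n1 * b0) - t * k" unfolding j_def a_def b_def k_def by (simp add: algebra_simps)
    then have "j = (l1 * a0 - n1 * b0) - k * ((l1 * a0 - n1 * b0) div k)" unfolding t_def by (simp add: mult.commute)
    then show ?thesis by (simp only: minus_mult_div_eq_mod)
  qed
  have bez: "a * e - b * (\<delta> * c) = 1" unfolding a_def b_def a0_def b0_def using uv by (simp add: algebra_simps)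
  have e1: "k * a + j * (\<delta> * c) = n1"
  proof -
    have "k * a + j * (\<delta> * c) = n1 * (a * e - b * (\<delta> * c))" unfolding k_def j_def by (simp add: algebra_simps)
    then show ?thesis using bez by simp
  qed
  have e2: "k * b + j * e = l1"
  proof -
    have "k * b + j * e = l1 * (a * e - b * (\<delta> * c))" unfolding k_def j_def by (simp add: algebra_simps)
    then show ?thesis using bez by simp
  qed
  have "j \<ge> 0" "j < k" using j kpos by simp_all
  moreover have "p \<noteq> 0" using dp s2 gpos by auto
  ultimately show ?thesis using bez e1 e2 dpc dpe by blast
qed




lemma prod_primes_dvd:
  fixes S :: "nat set" and x :: int
  assumes "finite S" "\<forall>q\<in>S. prime q" "\<forall>q\<in>S. int q dvd x"
  shows "int (\<Prod>S) dvd x"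
  using assms
proof (induction S rule: finite_induct)
  case empty then show ?case by simp
next
  case (insert q S)
  have pq: "prime q" using insert.prems(1) by simp
  have pS: "\<forall>s\<in>S. prime s" using insert.prems(1) by simp
  have "\<not> q dvd \<Prod>S"
  proof
    assume "q dvd \<Prod>S"
    then have "\<exists>s\<in>S. q dvd s" using prime_dvd_prod_iff[OF insert.hyps(1) pq, of "\<lambda>x. x"] by simp
    then obtain s where s: "s \<in> S" "q dvd s" by blast
    have "prime s" using pS s(1) by blast
    then have "q = s" using primes_dvd_imp_eq[OF pq _ s(2)] by blast
    then show False using s(1) insert.hyps(2) by simp
  qed
  then have "coprime q (\<Prod>S)" using prime_imp_coprime[OF pq] by blast
  then have c: "coprime (int q) (int (\<Prod>S))" by (rule coprime_int_iff[THEN iffD2])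
  have "\<forall>s\<in>S. int s dvd x" using insert.prems(2) by simp
  then have d1: "int (\<Prod>S) dvd x" using insert.IH pS by blast
  have d2: "int q dvd x" using insert.prems(2) by simp
  have "int q * int (\<Prod>S) dvd x" using divides_mult[OF d2 d1 c] .
  then show ?case using insert.hyps by simp
qed

lemma prod_inj:
  fixes P :: "nat set"
  assumes "finite P" "\<forall>q\<in>P. prime q"
  shows "inj_on (\<lambda>S. \<Prod>S) (Pow P)"
proof -
  have key: "S = {q\<in>P. q dvd \<Prod>S}" if SP: "S \<subseteq> P" for S
  proof
    show "S \<subseteq> {q\<in>P. q dvd \<Prod>S}" using that finite_subset[OF SP assms(1)]
      by (auto intro: dvd_prodI)
    show "{q\<in>P. q dvd \<Prod>S} \<subseteq> S"
    proof
      fix q assume q: "q \<in> {q\<in>P. q dvd \<Prod>S}"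
      have fS: "finite S" using finite_subset[OF SP assms(1)] .
      have pq: "prime q" using q assms(2) by blast
      have "\<exists>s\<in>S. q dvd s" using prime_dvd_prod_iff[OF fS pq, of "\<lambda>x. x"] q by simp
      then obtain s where "s \<in> S" "q dvd s" by blast
      moreover have "prime s" using \<open>s \<in> S\<close> SP assms(2) by blast
      ultimately have "q = s" using primes_dvd_imp_eq[OF pq] by blast
      then show "q \<in> S" using \<open>s\<in>S\<close> by simp
    qed
  qed
  show ?thesis
  proof (rule inj_onI)
    fix S S' assume "S \<in> Pow P" "S' \<in> Pow P" "\<Prod>S = \<Prod>S'"
    then show "S = S'" using key[of S] key[of S'] by auto
  qed
qed

lemma comb1:
  fixes P :: "nat set" and h :: "nat \<Rightarrow> int"
  assumes "finite P" "\<forall>q\<in>P. prime q"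
  shows "(\<Sum>l\<le>card P. (-1)^l * (\<Sum>d\<in>{\<Prod>S |S. S \<subseteq> P \<and> card S = l}. h d))
       = (\<Sum>S\<in>Pow P. (-1)^card S * h (\<Prod>S))"
proof -
  have inj: "inj_on (\<lambda>S. \<Prod>S) (Pow P)" using prod_inj assms by blast
  have "(-1)^l * (\<Sum>d\<in>{\<Prod>S |S. S \<subseteq> P \<and> card S = l}. h d)
      = (\<Sum>S\<in>{S. S \<in> Pow P \<and> card S = l}. (-1)^card S * h (\<Prod>S))" for l
  proof -
    have im: "{\<Prod>S |S. S \<subseteq> P \<and> card S = l} = (\<lambda>S. \<Prod>S) ` {S. S \<in> Pow P \<and> card S = l}"
      by auto
    have inj': "inj_on (\<lambda>S. \<Prod>S) {S. S \<in> Pow P \<and> card S = l}"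
      by (rule inj_on_subset[OF inj]) auto
    have "(\<Sum>d\<in>{\<Prod>S |S. S \<subseteq> P \<and> card S = l}. h d) = (\<Sum>S\<in>{S. S \<in> Pow P \<and> card S = l}. h (\<Prod>S))"
      by (rule sum.reindex_cong[OF inj' im]) simp
    then show ?thesis by (simp add: sum_distrib_left)
  qed
  then have "(\<Sum>l\<le>card P. (-1)^l * (\<Sum>d\<in>{\<Prod>S |S. S \<subseteq> P \<and> card S = l}. h d))
     = (\<Sum>l\<le>card P. (\<Sum>S\<in>{S. S \<in> Pow P \<and> card S = l}. (-1)^card S * h (\<Prod>S)))" by simp
  also have "\<dots> = (\<Sum>S\<in>Pow P. (-1)^card S * h (\<Prod>S))"
    by (rule sum.group) (use assms(1) in \<open>auto intro: card_mono\<close>)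
  finally show ?thesis .
qed

lemma comb2:
  fixes P T :: "nat set"
  assumes "finite P"
  shows "(\<Sum>S\<in>Pow P. (-1)^card S * (if S \<subseteq> T then 1 else 0 :: int)) = (if P \<inter> T = {} then 1 else 0)"
proof -
  have "(\<Sum>S\<in>Pow P. (-1)^card S * (if S \<subseteq> T then 1 else 0 :: int))
      = (\<Sum>S\<in>Pow P. if S \<subseteq> T then (-1)^card S else 0)"
    by (rule sum.cong) auto
  also have "\<dots> = (\<Sum>S\<in>Pow (P \<inter> T). (-1)^card S)"
    by (rule sum.mono_neutral_cong_right) (auto simp: assms)
  also have "(\<Sum>S\<in>Pow (P \<inter> T). (-1)^card S :: int)
      = (\<Sum>S\<in>Pow (P \<inter> T). (-1)^card S * (\<Prod>x\<in>S. 1) * (\<Prod>x\<in>(P\<inter>T)-S. 1))" by simp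
  also have "\<dots> = (\<Prod>x\<in>P \<inter> T. 1 - 1)"
    using prod_diff_conv_sum[of "P \<inter> T" "\<lambda>_. 1::int" "\<lambda>_. 1"] assms by simp
  also have "\<dots> = (if P \<inter> T = {} then 1 else 0)" using assms by auto
  finally show ?thesis .
qed

lemma coprime_lemma:
  fixes \<delta> :: nat and L n2 :: int
  assumes "\<delta> > 0" "\<forall>q \<in> prime_factors \<delta>. \<not> int q dvd L"
  shows "gcd (int \<delta> * n2) L dvd n2"
proof -
  have cop: "coprime L (int \<delta>)"
  proof (rule ccontr)
    assume "\<not> coprime L (int \<delta>)"
    then obtain c where c: "c dvd L" "c dvd int \<delta>" "\<not> is_unit c" by (rule not_coprimeE)
    then have "\<bar>c\<bar> \<noteq> 1" by auto
    then obtain p where p: "prime p" "p dvd c" by (rule prime_factor_int)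
    have p0: "p \<ge> 0" using p prime_ge_0_int by blast
    have "nat p \<in> prime_factors \<delta>"
      using p p0 c assms(1) dvd_trans[OF p(2) c(2)]
      by (auto simp: in_prime_factors_iff int_dvd_int_iff[symmetric])
    moreover have "int (nat p) dvd L" using p0 dvd_trans[OF p(2) c(1)] by simp
    ultimately show False using assms(2) by blast
  qed
  have "gcd (int \<delta> * n2) L = gcd n2 L" using gcd_mult_left_left_cancel[OF cop] .
  then show ?thesis by simp
qed





lemma mat2_nth: "mat2 a b c d $ 1 $ 1 = a" "mat2 a b c d $ 1 $ 2 = b"
  "mat2 a b c d $ 2 $ 1 = c" "mat2 a b c d $ 2 $ 2 = d"
  by (simp_all add: mat2_def)

lemma mat2_eq_iff: "mat2 a b c d = mat2 a' b' c' d' \<longleftrightarrow> a = a' \<and> b = b' \<and> c = c' \<and> d = d'"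
proof
  assume "mat2 a b c d = mat2 a' b' c' d'"
  then show "a = a' \<and> b = b' \<and> c = c' \<and> d = d'" by (metis mat2_nth)
qed simp

lemma mat2_mult: "mat2 a b c d ** mat2 a' b' c' d' =
   mat2 (a * a' + b * c') (a * b' + b * d') (c * a' + d * c') (c * b' + d * d')"
  unfolding matrix_matrix_mult_def
  by (simp add: vec_eq_iff mat2_def sum_2 forall_2)

lemma det_mat2: "det (mat2 a b c d) = a * d - b * c"
  by (simp add: det_2 mat2_nth)

lemma rep_prod:
  assumes "\<delta> > 0"
  shows "mat2 (of_int k) (of_int j) 0 (of_nat d / of_nat \<delta> * of_int p) **
     mat2 (of_int a) (of_int b) (of_int (int \<delta> * c)) (of_int e) =
     mat2 (of_int (k * a + j * (int \<delta> * c))) (of_int (k * b+j * e)) (of_int (int d * p * c)) (of_int (int d * p * e) / of_nat \<delta>)"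
  unfolding mat2_mult mat2_eq_iff using assms by (simp add: field_simps)

lemma reps_mem:
  assumes "\<delta> > 0"
  shows "(k,j,p,P) \<in> reps \<delta> d M \<longleftrightarrow> k>j \<and> j\<ge>0 \<and> p\<noteq>0 \<and>
    (\<exists>a b c e. P = mat2 (of_int a) (of_int b) (of_int (int \<delta> * c)) (of_int e) \<and> a * e - b * (int \<delta> * c) = 1 \<and>
      M = mat2 (of_int (k * a + j * (int \<delta> * c))) (of_int (k * b+j * e)) (of_int (int d * p * c)) (of_int (int d * p * e) / of_nat \<delta>))"
proof -
  have G: "P \<in> Gamma0 \<delta> \<longleftrightarrow> (\<exists>a b c e. P = mat2 (of_int a) (of_int b) (of_int (int \<delta> * c)) (of_int e) \<and> a * e - b * (int \<delta> * c) = 1)"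
    unfolding Gamma0_def by blast
  have R: "(k,j,p,P) \<in> reps \<delta> d M \<longleftrightarrow> k>j \<and> j\<ge>0 \<and> p\<noteq>0 \<and> P \<in> Gamma0 \<delta> \<and>
     mat2 (of_int k) (of_int j) 0 (of_nat d / of_nat \<delta> * of_int p) ** P = M"
    unfolding reps_def by simp
  show ?thesis
  proof
    assume "(k,j,p,P) \<in> reps \<delta> d M"
    then have A: "k>j" "j\<ge>0" "p\<noteq>0" "P \<in> Gamma0 \<delta>" "mat2 (of_int k) (of_int j) 0 (of_nat d / of_nat \<delta> * of_int p) ** P = M"
      using R by auto
    from A(4) G obtain a b c e where B: "P = mat2 (of_int a) (of_int b) (of_int (int \<delta> * c)) (of_int e)" "a * e - b * (int \<delta> * c) = 1"
      by blast
    have "M = mat2 (of_int (k * a + j * (int \<delta> * c))) (of_int (k * b+j * e)) (of_int (int d * p * c)) (of_int (int d * p * e) / of_nat \<delta>)"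
      using A(5) unfolding B(1) rep_prod[OF assms] by simp
    then show "k>j \<and> j\<ge>0 \<and> p\<noteq>0 \<and>
    (\<exists>a b c e. P = mat2 (of_int a) (of_int b) (of_int (int \<delta> * c)) (of_int e) \<and> a * e - b * (int \<delta> * c) = 1 \<and>
      M = mat2 (of_int (k * a + j * (int \<delta> * c))) (of_int (k * b+j * e)) (of_int (int d * p * c)) (of_int (int d * p * e) / of_nat \<delta>))"
      using A B by blast
  next
    assume "k>j \<and> j\<ge>0 \<and> p\<noteq>0 \<and>
    (\<exists>a b c e. P = mat2 (of_int a) (of_int b) (of_int (int \<delta> * c)) (of_int e) \<and> a * e - b * (int \<delta> * c) = 1 \<and>
      M = mat2 (of_int (k * a + j * (int \<delta> * c))) (of_int (k * b+j * e)) (of_int (int d * p * c)) (of_int (int d * p * e) / of_nat \<delta>))"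
    then obtain a b c e where A: "k>j" "j\<ge>0" "p\<noteq>0" "P = mat2 (of_int a) (of_int b) (of_int (int \<delta> * c)) (of_int e)"
      "a * e - b * (int \<delta> * c) = 1"
      "M = mat2 (of_int (k * a + j * (int \<delta> * c))) (of_int (k * b+j * e)) (of_int (int d * p * c)) (of_int (int d * p * e) / of_nat \<delta>)"
      by blast
    have "P \<in> Gamma0 \<delta>" using G A(4,5) by blast
    moreover have "mat2 (of_int k) (of_int j) 0 (of_nat d / of_nat \<delta> * of_int p) ** P = M"
      unfolding A(4) rep_prod[OF assms] A(6) ..
    ultimately show "(k,j,p,P) \<in> reps \<delta> d M" using R A(1-3) by blast
  qed
qed

lemma det_nz:
  assumes "\<delta> > 0"
  shows "det (mat2 (of_int n1) (of_int l1) (of_int n2) (of_int L / of_nat \<delta>) :: qmat) \<noteq> 0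
     \<longleftrightarrow> n1 * L - int \<delta> * l1 * n2 \<noteq> 0"
proof -
  have "det (mat2 (of_int n1) (of_int l1) (of_int n2) (of_int L / of_nat \<delta>) :: qmat)
      = of_int (n1 * L - int \<delta> * l1 * n2) / of_nat \<delta>"
    using assms by (simp add: det_mat2 field_simps)
  then show ?thesis using assms by (simp only: divide_eq_0_iff of_int_eq_0_iff of_nat_eq_0_iff) auto
qed

definition goodM :: "nat \<Rightarrow> qmat \<Rightarrow> int \<Rightarrow> bool" where
  "goodM \<delta> M L \<longleftrightarrow> (\<exists>n1 l1 n2. M = mat2 (of_int n1) (of_int l1) (of_int n2) (of_int L / of_nat \<delta>)
     \<and> n1 * L - int \<delta> * l1 * n2 \<noteq> 0 \<and> gcd (int \<delta> * n2) L dvd n2)"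

lemma goodM_unique:
  assumes "\<delta> > 0" "goodM \<delta> M L" "goodM \<delta> M L'"
  shows "L = L'"
proof -
  obtain n1 l1 n2 where A: "M = mat2 (of_int n1) (of_int l1) (of_int n2) (of_int L / of_nat \<delta>)"
    using assms(2) unfolding goodM_def by blast
  obtain n1' l1' n2' where B: "M = mat2 (of_int n1') (of_int l1') (of_int n2') (of_int L' / of_nat \<delta>)"
    using assms(3) unfolding goodM_def by blast
  have "mat2 (of_int n1) (of_int l1) (of_int n2) (of_int L / of_nat \<delta>) = mat2 (of_int n1') (of_int l1') (of_int n2') (of_int L' / of_nat \<delta>)"
    using A B by simp
  then have "(of_int L / of_nat \<delta> :: rat) = of_int L' / of_nat \<delta>" unfolding mat2_eq_iff by blast
  then show ?thesis using assms(1) by simp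
qed

lemma reps_unique:
  assumes "\<delta> > 0" "d > 0" "x \<in> reps \<delta> d M" "y \<in> reps \<delta> d M"
  shows "x = y"
proof -
  obtain k j p P where x: "x = (k,j,p,P)" using prod_cases4 by blast
  obtain k' j' p' P' where y: "y = (k',j',p',P')" using prod_cases4 by blast
  have "k>j \<and> j\<ge>0 \<and> p\<noteq>0 \<and>
    (\<exists>a b c e. P = mat2 (of_int a) (of_int b) (of_int (int \<delta> * c)) (of_int e) \<and> a * e - b * (int \<delta> * c) = 1 \<and>
      M = mat2 (of_int (k * a + j * (int \<delta> * c))) (of_int (k * b+j * e)) (of_int (int d * p * c)) (of_int (int d * p * e) / of_nat \<delta>))"
    using assms(3) unfolding x reps_mem[OF assms(1)] .
  then obtain a b c e where A: "k>j" "j\<ge>0" "p\<noteq>0"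
    "P = mat2 (of_int a) (of_int b) (of_int (int \<delta> * c)) (of_int e)" "a * e - b * (int \<delta> * c) = 1"
    "M = mat2 (of_int (k * a + j * (int \<delta> * c))) (of_int (k * b+j * e)) (of_int (int d * p * c)) (of_int (int d * p * e) / of_nat \<delta>)"
    by blast
  have "k'>j' \<and> j'\<ge>0 \<and> p'\<noteq>0 \<and>
    (\<exists>a b c e. P' = mat2 (of_int a) (of_int b) (of_int (int \<delta> * c)) (of_int e) \<and> a * e - b * (int \<delta> * c) = 1 \<and>
      M = mat2 (of_int (k' * a + j' * (int \<delta> * c))) (of_int (k' * b+j' * e)) (of_int (int d * p' * c)) (of_int (int d * p' * e) / of_nat \<delta>))"
    using assms(4) unfolding y reps_mem[OF assms(1)] .
  then obtain a' b' c' e' where B: "k'>j'" "j'\<ge>0" "p'\<noteq>0"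
    "P' = mat2 (of_int a') (of_int b') (of_int (int \<delta> * c')) (of_int e')" "a' * e' - b' * (int \<delta> * c') = 1"
    "M = mat2 (of_int (k' * a' + j' * (int \<delta> * c'))) (of_int (k' * b'+j' * e')) (of_int (int d * p' * c')) (of_int (int d * p' * e') / of_nat \<delta>)"
    by blast
  have Q: "mat2 (of_int (k * a + j * (int \<delta> * c))) (of_int (k * b+j * e)) (of_int (int d * p * c)) (of_int (int d * p * e) / of_nat \<delta>)
     = (mat2 (of_int (k' * a' + j' * (int \<delta> * c'))) (of_int (k' * b'+j' * e')) (of_int (int d * p' * c')) (of_int (int d * p' * e') / of_nat \<delta>) :: qmat)"
    by (rule trans[OF A(6)[symmetric] B(6)])
  have E: "k * a + j * (int \<delta> * c) = k' * a' + j' * (int \<delta> * c')" "k * b+j * e = k' * b'+j' * e'"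
    "int d * p * c = int d * p' * c'" "int d * p * e = int d * p' * e'"
  proof -
    have Q4: "rat_of_int (k * a + j * (int \<delta> * c)) = of_int (k' * a' + j' * (int \<delta> * c'))"
     "rat_of_int (k * b+j * e) = of_int (k' * b'+j' * e')" "rat_of_int (int d * p * c) = of_int (int d * p' * c')"
     "rat_of_int (int d * p * e) / of_nat \<delta> = of_int (int d * p' * e') / of_nat \<delta>"
      using Q unfolding mat2_eq_iff by blast+
    then show "k * a + j * (int \<delta> * c) = k' * a' + j' * (int \<delta> * c')" "k * b+j * e = k' * b'+j' * e'"
    "int d * p * c = int d * p' * c'" "int d * p * e = int d * p' * e'"
      using assms(1) by (simp_all only: divide_cancel_right of_nat_eq_0_iff of_int_eq_iff) auto
  qed
  have "k=k' \<and> j=j' \<and> p=p' \<and> a=a' \<and> b=b' \<and> c=c' \<and> e=e'"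
    using int_uniq[OF _ A(3) A(1,2) B(1,2) A(5) B(5) E] assms(2) by simp
  then show ?thesis using x y A(4) B(4) by simp
qed

lemma reps_nec:
  assumes "\<delta> > 0" "d > 0" "x \<in> reps \<delta> d M"
  shows "\<exists>L. goodM \<delta> M L \<and> int d dvd L"
proof -
  obtain k j p P where x: "x = (k,j,p,P)" using prod_cases4 by blast
  have "k>j \<and> j\<ge>0 \<and> p\<noteq>0 \<and>
    (\<exists>a b c e. P = mat2 (of_int a) (of_int b) (of_int (int \<delta> * c)) (of_int e) \<and> a * e - b * (int \<delta> * c) = 1 \<and>
      M = mat2 (of_int (k * a + j * (int \<delta> * c))) (of_int (k * b+j * e)) (of_int (int d * p * c)) (of_int (int d * p * e) / of_nat \<delta>))"
    using assms(3) unfolding x reps_mem[OF assms(1)] .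
  then obtain a b c e where A: "k>j" "j\<ge>0" "p\<noteq>0"
    "a * e - b * (int \<delta> * c) = 1"
    "M = mat2 (of_int (k * a + j * (int \<delta> * c))) (of_int (k * b+j * e)) (of_int (int d * p * c)) (of_int (int d * p * e) / of_nat \<delta>)"
    by blast
  have kp: "k > 0" using A by simp
  have g: "gcd (int \<delta> * (int d * p * c)) (int d * p * e) dvd int d * p * c"
    and D: "(k * a + j * (int \<delta> * c)) * (int d * p * e) - int \<delta> * (k * b+j * e) * (int d * p * c) \<noteq> 0"
  proof -
    have d0: "int d > 0" using assms(2) by simp
    show "gcd (int \<delta> * (int d * p * c)) (int d * p * e) dvd int d * p * c"
      using int_nec(1)[OF d0 A(3) kp A(4)] .
    show "(k * a + j * (int \<delta> * c)) * (int d * p * e) - int \<delta> * (k * b+j * e) * (int d * p * c) \<noteq> 0"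
      using int_nec(2)[OF d0 A(3) kp A(4), where j=j] .
  qed
  have "goodM \<delta> M (int d * p * e)"
    unfolding goodM_def using A(5) g D by blast
  then show ?thesis by auto
qed

lemma reps_ex:
  assumes "\<delta> > 0" "d > 0" "d dvd \<delta>" "goodM \<delta> M L" "int d dvd L"
  shows "reps \<delta> d M \<noteq> {}"
proof -
  obtain n1 l1 n2 where G: "M = mat2 (of_int n1) (of_int l1) (of_int n2) (of_int L / of_nat \<delta>)"
    "n1 * L - int \<delta> * l1 * n2 \<noteq> 0" "gcd (int \<delta> * n2) L dvd n2"
    using assms(4) unfolding goodM_def by blast
  have "\<exists>k j p a b c e. k>j \<and> j\<ge>0 \<and> p\<noteq>0 \<and> a * e - b * (int \<delta> * c) = 1 \<and> k * a + j * (int \<delta> * c) = n1 \<and>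
     k * b + j * e = l1 \<and> int d * p * c = n2 \<and> int d * p * e = L"
    by (rule int_ex) (use assms G in auto)
  then obtain k j p a b c e where H: "k>j" "j\<ge>0" "p\<noteq>0" "a * e - b * (int \<delta> * c) = 1" "k * a + j * (int \<delta> * c) = n1"
     "k * b + j * e = l1" "int d * p * c = n2" "int d * p * e = L" by blast
  have "(k,j,p,mat2 (of_int a) (of_int b) (of_int (int \<delta> * c)) (of_int e)) \<in> reps \<delta> d M"
    unfolding reps_mem[OF assms(1)] using H G(1) by blast
  then show ?thesis by blast
qed

lemma reps_sub:
  assumes "\<delta> > 0" "d > 0"
  shows "finite (reps \<delta> d M) \<and> card (reps \<delta> d M) \<le> 1"
proof (cases "reps \<delta> d M = {}")
  case False
  then obtain x where "x \<in> reps \<delta> d M" by blast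
  then have "reps \<delta> d M = {x}" using reps_unique[OF assms] by blast
  then show ?thesis by simp
qed simp

lemma card_reps_1:
  assumes "\<delta> > 0" "d > 0" "reps \<delta> d M \<noteq> {}"
  shows "card (reps \<delta> d M) = 1"
proof -
  obtain x where "x \<in> reps \<delta> d M" using assms by blast
  then have "reps \<delta> d M = {x}" using reps_unique[OF assms(1,2)] by blast
  then show ?thesis by simp
qed

lemma LHS_iff:
  assumes "\<delta> > 0"
  shows "M \<in> LHS_set \<delta> \<longleftrightarrow> (\<exists>L. goodM \<delta> M L \<and> (\<forall>q\<in>prime_factors \<delta>. \<not> int q dvd L))"
proof
  assume "M \<in> LHS_set \<delta>"
  then obtain n1 l1 n2 l2 where A: "M = mat2 (of_int n1) (of_int l1) (of_int n2) (of_int l2 / of_nat \<delta>)"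
    "det M \<noteq> 0" "\<forall>q \<in> prime_factors \<delta>. \<not> int q dvd l2" unfolding LHS_set_def by blast
  have "n1 * l2 - int \<delta> * l1 * n2 \<noteq> 0" using A(1,2) det_nz[OF assms] by simp
  moreover have "gcd (int \<delta> * n2) l2 dvd n2" using coprime_lemma[OF assms A(3)] .
  ultimately have "goodM \<delta> M l2" unfolding goodM_def using A(1) by blast
  then show "\<exists>L. goodM \<delta> M L \<and> (\<forall>q\<in>prime_factors \<delta>. \<not> int q dvd L)" using A(3) by blast
next
  assume "\<exists>L. goodM \<delta> M L \<and> (\<forall>q\<in>prime_factors \<delta>. \<not> int q dvd L)"
  then obtain L n1 l1 n2 where A: "M = mat2 (of_int n1) (of_int l1) (of_int n2) (of_int L / of_nat \<delta>)"
    "n1 * L - int \<delta> * l1 * n2 \<noteq> 0" "\<forall>q\<in>prime_factors \<delta>. \<not> int q dvd L" unfolding goodM_def by blast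
  have "det M \<noteq> 0" using A(1,2) det_nz[OF assms] by simp
  then show "M \<in> LHS_set \<delta>" unfolding LHS_set_def using A by blast
qed

lemma Cprops:
  fixes \<delta> :: nat
  assumes "\<delta> > 0" "S \<subseteq> prime_factors \<delta>"
  shows "\<Prod>S > 0" "\<Prod>S dvd \<delta>"
proof -
  have fin: "finite S" using assms(2) finite_subset by blast
  have pr: "\<forall>q\<in>S. prime q" using assms(2) by auto
  show "\<Prod>S > 0"
    apply (rule prod_pos)
    using pr prime_gt_0_nat by blast
  have "\<forall>q\<in>S. int q dvd int \<delta>"
  proof
    fix q assume "q \<in> S"
    then have "q \<in> prime_factors \<delta>" using assms(2) by blast
    then have "q dvd \<delta>" by (simp add: in_prime_factors_iff)
    then show "int q dvd int \<delta>" by (simp only: of_nat_dvd_iff)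
  qed
  then have "int (\<Prod>S) dvd int \<delta>" by (rule prod_primes_dvd[OF fin pr])
  then show "\<Prod>S dvd \<delta>" by (simp only: of_nat_dvd_iff)
qed

theorem lemma4p5:
  fixes \<delta> :: nat
  assumes "\<delta> > 0"
  shows "\<forall>M :: qmat.
     (\<forall>l \<le> card (prime_factors \<delta>). \<forall>d \<in> C_set l \<delta>. finite (reps \<delta> d M)) \<and>
     (if M \<in> LHS_set \<delta> then 1 else 0 :: int) =
       (\<Sum>l \<le> card (prime_factors \<delta>). (-1) ^ l  * 
          (\<Sum>d \<in> C_set l \<delta>. int (card (reps \<delta> d M))))"
proof (rule allI, rule conjI)
  fix M :: qmat
  let ?P = "prime_factors \<delta>"
  have fin: "finite ?P" by simp
  have pr: "\<forall>q\<in>?P. prime q" by auto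
  show "\<forall>l \<le> card ?P. \<forall>d \<in> C_set l \<delta>. finite (reps \<delta> d M)"
  proof (intro allI ballI impI)
    fix l d assume "l \<le> card ?P" and dC: "d \<in> C_set l \<delta>"
    from dC obtain S where "S \<subseteq> ?P" "d = \<Prod>S" unfolding C_set_def by blast
    then have "d > 0" using Cprops[OF assms] by blast
    then show "finite (reps \<delta> d M)" using reps_sub[OF assms] by blast
  qed
  have R: "(\<Sum>l \<le> card ?P. (-1) ^ l * (\<Sum>d \<in> C_set l \<delta>. int (card (reps \<delta> d M))))
     = (\<Sum>S\<in>Pow ?P. (-1)^card S * int (card (reps \<delta> (\<Prod>S) M)))"
    unfolding C_set_def by (rule comb1[OF fin pr])
  show "(if M \<in> LHS_set \<delta> then 1 else 0 :: int) =
       (\<Sum>l \<le> card ?P. (-1) ^ l * (\<Sum>d \<in> C_set l \<delta>. int (card (reps \<delta> d M))))"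
  proof (cases "\<exists>L. goodM \<delta> M L")
    case True
    then obtain L where L: "goodM \<delta> M L" by blast
    let ?T = "{q. int q dvd L}"
    have key: "int (card (reps \<delta> (\<Prod>S) M)) = (if S \<subseteq> ?T then 1 else 0)" if SP: "S \<in> Pow ?P" for S
    proof -
      have S: "S \<subseteq> ?P" using SP by simp
      have d0: "\<Prod>S > 0" and dd: "\<Prod>S dvd \<delta>" using Cprops[OF assms S] by auto
      have finS: "finite S" using S finite_subset by blast
      show ?thesis
      proof (cases "S \<subseteq> ?T")
        case True
        have "int (\<Prod>S) dvd L"
          by (rule prod_primes_dvd[OF finS]) (use S True in auto)
        then have "reps \<delta> (\<Prod>S) M \<noteq> {}" using reps_ex[OF assms d0 dd L] by blast
        then show ?thesis using card_reps_1[OF assms d0] True by simp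
      next
        case False
        then obtain q where q: "q \<in> S" "\<not> int q dvd L" by auto
        have "int q dvd int (\<Prod>S)" using q(1) finS by (simp add: dvd_prodI)
        then have nd: "\<not> int (\<Prod>S) dvd L" using q(2) dvd_trans by blast
        have "reps \<delta> (\<Prod>S) M = {}"
        proof (rule ccontr)
          assume "reps \<delta> (\<Prod>S) M \<noteq> {}"
          then obtain x where "x \<in> reps \<delta> (\<Prod>S) M" by blast
          then obtain L' where "goodM \<delta> M L'" "int (\<Prod>S) dvd L'" using reps_nec[OF assms d0] by blast
          then show False using goodM_unique[OF assms L] nd by blast
        qed
        then show ?thesis using False by simp
      qed
    qed
    have "(\<Sum>S\<in>Pow ?P. (-1)^card S * int (card (reps \<delta> (\<Prod>S) M)))
       = (\<Sum>S\<in>Pow ?P. (-1)^card S * (if S \<subseteq> ?T then 1 else 0 :: int))"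
      by (rule sum.cong) (use key in auto)
    also have "\<dots> = (if ?P \<inter> ?T = {} then 1 else 0)" by (rule comb2[OF fin])
    also have "(?P \<inter> ?T = {}) = (M \<in> LHS_set \<delta>)"
      unfolding LHS_iff[OF assms] using L goodM_unique[OF assms L] by blast
    finally show ?thesis using R by simp
  next
    case False
    have "reps \<delta> (\<Prod>S) M = {}" if SP: "S \<in> Pow ?P" for S
    proof -
      have d0: "\<Prod>S > 0" using Cprops[OF assms] SP by auto
      show ?thesis using reps_nec[OF assms d0] False by blast
    qed
    then have "(\<Sum>S\<in>Pow ?P. (-1)^card S * int (card (reps \<delta> (\<Prod>S) M))) = 0" by simp
    moreover have "M \<notin> LHS_set \<delta>" using LHS_iff[OF assms] False by blast
    ultimately show ?thesis using R by simp
  qed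
qed

end
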